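(* Let $G$ be a finite solvable group with $\mathcal{I}(G)\neq G$. Then $\Sigma(G)\neq\emptyset$, i.e. $G$ contains an element whose order is divisible by at least two distinct primes.
   Context: For a finite group $G$, let $\widetilde{\Gamma}(G)$ be the graph with vertex set $G$ in which two distinct elements $x,y$ are adjacent if and only if $|\langle x,y\rangle|$ is divisible by at least three distinct primes. $\mathcal{I}(G)$ denotes the set of isolated vertices of $\widetilde{\Gamma}(G)$. $\Sigma(G)$ denotes the set of elements $g\in G$ whose order is divisible by at least two distinct primes. *)

theory Defs
  imports "HOL-Algebra.Algebra"
begin

definition num_prime_divisors :: "nat \<Rightarrow> nat" where
  "num_prime_divisors n = card {p. Factorial_Ring.prime p \<and> p dvd n}"

definition tgamma_adj :: "('a, 'b) monoid_scheme \<Rightarrow> 'a \<Rightarrow> 'a \<Rightarrow> bool" where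
  "tgamma_adj G x y \<longleftrightarrow> x \<in> carrier G \<and> y \<in> carrier G \<and> x \<noteq> y \<and>
     num_prime_divisors (card (generate G {x, y})) \<ge> 3"

definition isolated_vertices :: "('a, 'b) monoid_scheme \<Rightarrow> 'a set" where
  "isolated_vertices G = {x \<in> carrier G. \<forall>y \<in> carrier G. \<not> tgamma_adj G x y}"

definition Sigma_set :: "('a, 'b) monoid_scheme \<Rightarrow> 'a set" where
  "Sigma_set G = {g \<in> carrier G. num_prime_divisors (group.ord G g) \<ge> 2}"

end

theory Submission
  imports Defs
begin

definition pel :: "nat \<Rightarrow> nat \<Rightarrow> bool" where
  "pel p n \<longleftrightarrow> (\<forall>t. Factorial_Ring.prime t \<longrightarrow> t dvd n \<longrightarrow> t = p)"

lemma pel_coprime: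
  assumes "pel p m" "pel q n" "p \<noteq> q" shows "coprime m n"
proof (rule ccontr)
  assume "\<not> coprime m n"
  then have "gcd m n \<noteq> 1" by (simp add: coprime_iff_gcd_eq_1)
  then obtain t where t: "Factorial_Ring.prime t" "t dvd gcd m n" using prime_factor_nat by blast
  then show False using assms unfolding pel_def by auto
qed

lemma pel_power: "Factorial_Ring.prime p \<Longrightarrow> pel p (p ^ a)"
  unfolding pel_def by (metis prime_dvd_power primes_dvd_imp_eq)

lemma pel_dvd: "pel p n \<Longrightarrow> m dvd n \<Longrightarrow> pel p m"
  unfolding pel_def using dvd_trans by blast

lemma pel_one_if: "pel p n \<Longrightarrow> pel q n \<Longrightarrow> p \<noteq> q \<Longrightarrow> n = 1"
  unfolding pel_def by (metis prime_factor_nat)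

lemma npd_ge2:
  assumes "n > 0" "Factorial_Ring.prime p" "Factorial_Ring.prime q" "p \<noteq> q" "p dvd n" "q dvd n"
  shows "num_prime_divisors n \<ge> 2"
proof -
  have fin: "finite {p. Factorial_Ring.prime p \<and> p dvd n}"
    using assms(1) by (auto intro: finite_subset[of _ "{..n}"] dest: dvd_imp_le)
  have "{p, q} \<subseteq> {p. Factorial_Ring.prime p \<and> p dvd n}" using assms by auto
  then have "card {p,q} \<le> num_prime_divisors n" unfolding num_prime_divisors_def
    using card_mono fin by blast
  then show ?thesis using assms(4) by simp
qed

lemma npd_lt2_pel:
  assumes "n > 0" "num_prime_divisors n < 2" "Factorial_Ring.prime p" "p dvd n" shows "pel p n"
  unfolding pel_def
proof (intro allI impI)
  fix t assume "Factorial_Ring.prime t" "t dvd n"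
  then show "t = p" using npd_ge2[OF assms(1) assms(3), of t] assms by linarith
qed

context group begin

lemma eppo_pel:
  assumes "Sigma_set G = {}" "finite (carrier G)" "x \<in> carrier G" "Factorial_Ring.prime p" "p dvd ord x"
  shows "pel p (ord x)"
proof -
  have "ord x > 0" using ord_ge_1[OF assms(2,3)] by linarith
  moreover have "num_prime_divisors (ord x) < 2" using assms(1,3) unfolding Sigma_set_def by auto
  ultimately show ?thesis using npd_lt2_pel assms by blast
qed

lemma mix:
  assumes fin: "finite (carrier G)" and x: "x \<in> carrier G" and y: "y \<in> carrier G"
    and comm: "x \<otimes> y = y \<otimes> x" and cop: "coprime (ord x) (ord y)"
    and x1: "x \<noteq> \<one>" and y1: "y \<noteq> \<one>"
  shows "x \<otimes> y \<in> Sigma_set G"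
proof -
  define n where "n = ord (x \<otimes> y)"
  have xyc: "x \<otimes> y \<in> carrier G" using x y by simp
  have n0: "n > 0" using ord_ge_1[OF fin xyc] unfolding n_def by linarith
  have "(x \<otimes> y) [^] n = \<one>" using xyc unfolding n_def by simp
  then have e: "x [^] n \<otimes> y [^] n = \<one>" using pow_mult_distrib[OF comm x y] by simp
  define z where "z = x [^] n"
  have zc: "z \<in> carrier G" using x z_def by simp
  have yn: "y [^] n \<in> carrier G" using y by simp
  have zi: "z = inv (y [^] n)" using inv_equality[OF e yn zc[unfolded z_def]] unfolding z_def by simp
  have "z [^] ord x = x [^] (n * ord x)" unfolding z_def using nat_pow_pow[OF x] by simp
  also have "\<dots> = \<one>" using pow_eq_id[OF x] by simp
  finally have "z [^] ord x = \<one>" .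
  then have d1: "ord z dvd ord x" using pow_eq_id zc by blast
  have "z [^] ord y = inv ((y [^] n) [^] ord y)" unfolding zi using nat_pow_inv[OF yn] by simp
  also have "(y [^] n) [^] ord y = y [^] (n * ord y)" using nat_pow_pow[OF y] by simp
  also have "\<dots> = \<one>" using pow_eq_id[OF y] by simp
  finally have "z [^] ord y = \<one>" by simp
  then have d2: "ord z dvd ord y" using pow_eq_id zc by blast
  have "ord z dvd 1" using d1 d2 cop coprime_common_divisor by blast
  then have "ord z = 1" by simp
  then have z1: "z = \<one>" using ord_eq_1 zc by blast
  have "x [^] n = \<one>" using z1 z_def by simp
  then have dx: "ord x dvd n" using pow_eq_id x by blast
  have "inv (y [^] n) = \<one>" using zi z1 by simp
  then have "y [^] n = \<one>" using yn by (metis inv_inv inv_one)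
  then have dy: "ord y dvd n" using pow_eq_id y by blast
  have "ord x \<noteq> 1" using x x1 ord_eq_1 by blast
  then obtain p where p: "Factorial_Ring.prime p" "p dvd ord x" using prime_factor_nat by blast
  have "ord y \<noteq> 1" using y y1 ord_eq_1 by blast
  then obtain q where q: "Factorial_Ring.prime q" "q dvd ord y" using prime_factor_nat by blast
  have "p \<noteq> q"
  proof
    assume "p = q"
    then have "p dvd 1" using p q cop coprime_common_divisor by blast
    then show False using p(1) by simp
  qed
  moreover have "p dvd n" "q dvd n" using p q dx dy dvd_trans by blast+
  ultimately have "num_prime_divisors n \<ge> 2"
    using npd_ge2[OF n0 p(1) q(1)] by blast
  then show ?thesis unfolding Sigma_set_def n_def using xyc by simp
qed


lemma inv_cancel_l1: "x \<in> carrier G \<Longrightarrow> y \<in> carrier G \<Longrightarrow> inv x \<otimes> (x \<otimes> y) = y"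
  by (simp add: m_assoc[symmetric])

lemma inv_cancel_l2: "x \<in> carrier G \<Longrightarrow> y \<in> carrier G \<Longrightarrow> x \<otimes> (inv x \<otimes> y) = y"
  by (simp add: m_assoc[symmetric])

lemmas gsimps = m_assoc inv_cancel_l1 inv_cancel_l2 inv_mult_group

lemma ord_dvd_sub:
  assumes "finite (carrier G)" "subgroup H G" "y \<in> H"
  shows "ord y dvd card H"
proof -
  interpret H: group "G\<lparr>carrier := H\<rparr>" using subgroup.subgroup_is_group[OF assms(2) is_group] .
  have "y [^]\<^bsub>G\<lparr>carrier := H\<rparr>\<^esub> order (G\<lparr>carrier := H\<rparr>) = \<one>\<^bsub>G\<lparr>carrier := H\<rparr>\<^esub>"
    using H.pow_order_eq_1 assms(3) by simp
  then have "y [^] card H = \<one>" by (simp add: order_def nat_pow_consistent[symmetric])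
  then show ?thesis using pow_eq_id[OF subgroup.mem_carrier[OF assms(2,3)]] by simp
qed

lemma cauchy:
  assumes fin: "finite (carrier G)" and p: "Factorial_Ring.prime p" and d: "p dvd order G"
  shows "\<exists>x\<in>carrier G. ord x = p"
proof -
  obtain m where m: "order G = p ^ 1 * m" using d unfolding dvd_def by (metis power_one_right)
  obtain H where H: "subgroup H G" "card H = p ^ 1" using sylow_thm[OF p is_group m fin] by blast
  have c2: "card H \<ge> 2" using H(2) p prime_ge_2_nat by simp
  have "\<exists>x\<in>H. x \<noteq> \<one>"
  proof (rule ccontr)
    assume "\<not> (\<exists>x\<in>H. x \<noteq> \<one>)"
    then have "H \<subseteq> {\<one>}" by blast
    then have "card H \<le> card {\<one>}" by (intro card_mono) auto
    then have "card H \<le> 1" by simp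
    then show False using c2 by simp
  qed
  then obtain x where x: "x \<in> H" "x \<noteq> \<one>" by blast
  have xc: "x \<in> carrier G" using subgroup.mem_carrier[OF H(1) x(1)] .
  have "ord x dvd p" using ord_dvd_sub[OF fin H(1) x(1)] H(2) by simp
  moreover have "ord x \<noteq> 1" using ord_eq_1[OF xc] x(2) by simp
  ultimately have "ord x = p" using p unfolding prime_nat_iff by (metis)
  then show ?thesis using xc by blast
qed

lemma conj_pow:
  assumes "x \<in> carrier G" "y \<in> carrier G"
  shows "(x \<otimes> y \<otimes> inv x) [^] (n::nat) = x \<otimes> (y [^] n) \<otimes> inv x"
proof (induct n)
  case 0 then show ?case using assms by simp
next
  case (Suc n) then show ?case using assms by (simp add: gsimps)
qed

lemma fix_one:
  assumes eppo: "Sigma_set G = {}" and fin: "finite (carrier G)"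
    and a: "a \<in> carrier G" "a \<noteq> \<one>" and v: "v \<in> carrier G"
    and c: "a \<otimes> v = v \<otimes> a" and cop: "coprime (ord a) (ord v)"
  shows "v = \<one>"
  using mix[OF fin a(1) v c cop a(2)] eppo by blast

lemma mult_image_eq:
  assumes "finite S" "S \<subseteq> carrier G" "a \<in> carrier G" "\<And>s. s \<in> S \<Longrightarrow> a \<otimes> s \<in> S"
  shows "(\<lambda>s. a \<otimes> s) ` S = S"
proof -
  have inj: "inj_on (\<lambda>s. a \<otimes> s) S"
  proof (rule inj_onI)
    fix s t assume st: "s \<in> S" "t \<in> S" "a \<otimes> s = a \<otimes> t"
    have "s \<in> carrier G" "t \<in> carrier G" using st(1,2) assms(2) by auto
    then show "s = t" using l_cancel[OF st(3)] assms(3) by blast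
  qed
  have "(\<lambda>s. a \<otimes> s) ` S \<subseteq> S" using assms(4) by blast
  moreover have "card ((\<lambda>s. a \<otimes> s) ` S) = card S" using card_image[OF inj] .
  ultimately show ?thesis using card_subset_eq[OF assms(1)] by blast
qed


lemma sub_comm_group:
  assumes "subgroup V G" "\<And>a b. a \<in> V \<Longrightarrow> b \<in> V \<Longrightarrow> a \<otimes> b = b \<otimes> a"
  shows "comm_group (G\<lparr>carrier := V\<rparr>)"
proof -
  interpret VG: group "G\<lparr>carrier := V\<rparr>" using subgroup.subgroup_is_group[OF assms(1) is_group] .
  show ?thesis by (rule VG.group_comm_groupI) (use assms(2) in simp)
qed

lemma conj_finprod:
  assumes cg: "comm_group (G\<lparr>carrier := V\<rparr>)" and V: "V \<lhd> G" and a: "a \<in> carrier G"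
    and S: "finite S" and g: "g \<in> S \<rightarrow> V"
  shows "a \<otimes> finprod (G\<lparr>carrier := V\<rparr>) g S \<otimes> inv a
         = finprod (G\<lparr>carrier := V\<rparr>) (\<lambda>k. a \<otimes> g k \<otimes> inv a) S"
  using S g
proof (induct S rule: finite_induct)
  case empty
  interpret VG: comm_group "G\<lparr>carrier := V\<rparr>" by (rule cg)
  show ?case using a by simp
next
  case (insert s F)
  interpret VG: comm_group "G\<lparr>carrier := V\<rparr>" by (rule cg)
  have Vc: "V \<subseteq> carrier G" using normal_imp_subgroup[OF V] subgroup.subset by blast
  have conjV: "\<And>v. v \<in> V \<Longrightarrow> a \<otimes> v \<otimes> inv a \<in> V" using normal_invE(2)[OF V a] by blast
  have gF: "g \<in> F \<rightarrow> carrier (G\<lparr>carrier := V\<rparr>)" using insert.prems by auto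
  have gs: "g s \<in> carrier (G\<lparr>carrier := V\<rparr>)" using insert.prems by auto
  have cF: "(\<lambda>k. a \<otimes> g k \<otimes> inv a) \<in> F \<rightarrow> carrier (G\<lparr>carrier := V\<rparr>)"
    using insert.prems conjV by auto
  have cs: "a \<otimes> g s \<otimes> inv a \<in> carrier (G\<lparr>carrier := V\<rparr>)" using insert.prems conjV by auto
  have e1: "finprod (G\<lparr>carrier := V\<rparr>) g (insert s F) = g s \<otimes> finprod (G\<lparr>carrier := V\<rparr>) g F"
    using VG.finprod_insert[OF insert(1,2) gF gs] by simp
  have e2: "finprod (G\<lparr>carrier := V\<rparr>) (\<lambda>k. a \<otimes> g k \<otimes> inv a) (insert s F)
      = (a \<otimes> g s \<otimes> inv a) \<otimes> finprod (G\<lparr>carrier := V\<rparr>) (\<lambda>k. a \<otimes> g k \<otimes> inv a) F"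
    using VG.finprod_insert[OF insert(1,2) cF cs] by simp
  have IH: "a \<otimes> finprod (G\<lparr>carrier := V\<rparr>) g F \<otimes> inv a
         = finprod (G\<lparr>carrier := V\<rparr>) (\<lambda>k. a \<otimes> g k \<otimes> inv a) F"
    using insert.hyps(3) insert.prems by auto
  have Pc: "finprod (G\<lparr>carrier := V\<rparr>) g F \<in> carrier G"
    using VG.finprod_closed[OF gF] Vc by auto
  have gsc: "g s \<in> carrier G" using gs Vc by auto
  have "a \<otimes> (g s \<otimes> finprod (G\<lparr>carrier := V\<rparr>) g F) \<otimes> inv a
      = (a \<otimes> g s \<otimes> inv a) \<otimes> (a \<otimes> finprod (G\<lparr>carrier := V\<rparr>) g F \<otimes> inv a)"
    using a Pc gsc by (simp add: gsimps)
  then show ?case using e1 e2 IH by simp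
qed

lemma norm_trivial:
  assumes eppo: "Sigma_set G = {}" and fin: "finite (carrier G)"
    and V: "V \<lhd> G" and comm: "\<And>a b. a \<in> V \<Longrightarrow> b \<in> V \<Longrightarrow> a \<otimes> b = b \<otimes> a"
    and pV: "\<And>v. v \<in> V \<Longrightarrow> pel p (ord v)"
    and S: "S \<subseteq> carrier G" and a: "a \<in> carrier G" "a \<noteq> \<one>" and aS: "\<And>s. s \<in> S \<Longrightarrow> a \<otimes> s \<in> S"
    and pa: "pel q (ord a)" and pq: "p \<noteq> q"
    and v: "v \<in> V"
  shows "finprod (G\<lparr>carrier := V\<rparr>) (\<lambda>k. k \<otimes> v \<otimes> inv k) S = \<one>"
proof -
  have sV: "subgroup V G" using normal_imp_subgroup[OF V] .
  have cg: "comm_group (G\<lparr>carrier := V\<rparr>)" using sub_comm_group[OF sV comm] .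
  interpret VG: comm_group "G\<lparr>carrier := V\<rparr>" by (rule cg)
  have Vc: "V \<subseteq> carrier G" using sV subgroup.subset by blast
  have vc: "v \<in> carrier G" using v Vc by blast
  have finS: "finite S" using S fin finite_subset by blast
  define f where "f = (\<lambda>k. k \<otimes> v \<otimes> inv k)"
  have fV: "\<And>k. k \<in> carrier G \<Longrightarrow> f k \<in> V" unfolding f_def using normal_invE(2)[OF V] v by blast
  have fS: "f \<in> S \<rightarrow> V" using fV S by blast
  have fS': "f \<in> S \<rightarrow> carrier (G\<lparr>carrier := V\<rparr>)" using fS by simp
  define T where "T = finprod (G\<lparr>carrier := V\<rparr>) f S"
  have TV: "T \<in> V" unfolding T_def using VG.finprod_closed[OF fS'] by simp
  have Tc: "T \<in> carrier G" using TV Vc by blast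
  have "a \<otimes> T \<otimes> inv a = finprod (G\<lparr>carrier := V\<rparr>) (\<lambda>k. a \<otimes> f k \<otimes> inv a) S"
    unfolding T_def using conj_finprod[OF cg V a(1) finS fS] .
  also have "\<dots> = finprod (G\<lparr>carrier := V\<rparr>) (\<lambda>k. f (a \<otimes> k)) S"
  proof (rule VG.finprod_cong')
    show "S = S" by simp
    show "(\<lambda>k. f (a \<otimes> k)) \<in> S \<rightarrow> carrier (G\<lparr>carrier := V\<rparr>)" using fV S a(1) by auto
    fix k assume k: "k \<in> S"
    then have kc: "k \<in> carrier G" using S by blast
    show "a \<otimes> f k \<otimes> inv a = f (a \<otimes> k)" unfolding f_def using a(1) kc vc by (simp add: gsimps)
  qed
  also have "\<dots> = finprod (G\<lparr>carrier := V\<rparr>) f ((\<lambda>k. a \<otimes> k) ` S)"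
  proof -
    have inj: "inj_on (\<lambda>k. a \<otimes> k) S"
    proof (rule inj_onI)
      fix s t assume st: "s \<in> S" "t \<in> S" "a \<otimes> s = a \<otimes> t"
      have "s \<in> carrier G" "t \<in> carrier G" using st(1,2) S by auto
      then show "s = t" using l_cancel[OF st(3)] a(1) by blast
    qed
    have "f \<in> (\<lambda>k. a \<otimes> k) ` S \<rightarrow> carrier (G\<lparr>carrier := V\<rparr>)" using fV S a(1) by auto
    then show ?thesis using VG.finprod_reindex[OF _ inj] by simp
  qed
  also have "(\<lambda>k. a \<otimes> k) ` S = S" using mult_image_eq[OF finS S a(1) aS] .
  finally have "a \<otimes> T \<otimes> inv a = T" unfolding T_def .
  then have comm_aT: "a \<otimes> T = T \<otimes> a" using a(1) Tc by (metis inv_solve_right' m_closed)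
  have "coprime (ord a) (ord T)" using pel_coprime[OF pa pV[OF TV]] pq by simp
  then have "T = \<one>" using fix_one[OF eppo fin a(1) a(2) Tc comm_aT] by simp
  then show ?thesis unfolding T_def f_def .
qed


lemma nontriv_elem:
  assumes "subgroup Q G" "finite Q" "card Q \<ge> 2"
  shows "\<exists>a\<in>Q. a \<noteq> \<one>"
proof (rule ccontr)
  assume "\<not> (\<exists>a\<in>Q. a \<noteq> \<one>)"
  then have "Q \<subseteq> {\<one>}" by blast
  then have "card Q \<le> card {\<one>}" by (intro card_mono) auto
  then show False using assms(3) by simp
qed

lemma no_config:
  assumes eppo: "Sigma_set G = {}" and fin: "finite (carrier G)"
    and V: "V \<lhd> G" and comm: "\<And>a b. a \<in> V \<Longrightarrow> b \<in> V \<Longrightarrow> a \<otimes> b = b \<otimes> a"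
    and pV: "\<And>v. v \<in> V \<Longrightarrow> pel p (ord v)" and v: "v \<in> V" "v \<noteq> \<one>"
    and Q: "subgroup Q G" "card Q = q ^ e" "e > 0" and q: "Factorial_Ring.prime q"
    and h: "h \<in> carrier G" "h \<noteq> \<one>" "pel r (ord h)"
    and hQ: "\<And>x. x \<in> Q \<Longrightarrow> h \<otimes> x \<otimes> inv h \<in> Q"
    and pq: "p \<noteq> q" and pr: "p \<noteq> r" and qr: "q \<noteq> r"
  shows False
proof -
  have Qc: "Q \<subseteq> carrier G" using Q(1) subgroup.subset by blast
  have finQ: "finite Q" using Qc fin finite_subset by blast
  have sV: "subgroup V G" using normal_imp_subgroup[OF V] .
  have Vc: "V \<subseteq> carrier G" using sV subgroup.subset by blast
  have vc: "v \<in> carrier G" using v Vc by blast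
  have pelQ: "pel q (ord x)" if "x \<in> Q" for x
  proof -
    have "ord x dvd q ^ e" using ord_dvd_sub[OF fin Q(1) that] Q(2) by simp
    then show ?thesis using pel_dvd[OF pel_power[OF q]] by blast
  qed
  define Hs where "Hs = {h [^] (i::nat) | i. True}"
  have Hsc: "Hs \<subseteq> carrier G" using h(1) unfolding Hs_def by auto
  have finHs: "finite Hs" using Hsc fin finite_subset by blast
  have oneHs: "\<one> \<in> Hs" unfolding Hs_def
  proof -
    have "\<one> = h [^] (0::nat)" by simp
    then show "\<one> \<in> {h [^] (i::nat) | i. True}" by blast
  qed
  have hHs: "h \<otimes> y \<in> Hs" if yH: "y \<in> Hs" for y
  proof -
    obtain i where i: "y = h [^] (i::nat)" using yH unfolding Hs_def by blast
    have "h \<otimes> y = h [^] (Suc i)" using nat_pow_Suc2[OF h(1)] i by simp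
    then show ?thesis unfolding Hs_def by blast
  qed
  have pelHs: "pel r (ord y)" if yH: "y \<in> Hs" for y
  proof -
    obtain i where i: "y = h [^] (i::nat)" using yH unfolding Hs_def by blast
    have yc: "y \<in> carrier G" using yH Hsc by blast
    have "y [^] ord h = h [^] (i * ord h)" using i nat_pow_pow[OF h(1)] by simp
    also have "\<dots> = \<one>" using pow_eq_id[OF h(1)] by simp
    finally have "ord y dvd ord h" using pow_eq_id[OF yc] by simp
    then show ?thesis using pel_dvd h(3) by blast
  qed
  have normHs0: "h [^] i \<otimes> x \<otimes> inv (h [^] i) \<in> Q" if "x \<in> Q" for x and i :: nat
    using that
  proof (induct i arbitrary: x)
    case 0 then show ?case using Qc by auto
  next
    case (Suc i)
    have xc: "x \<in> carrier G" using Suc.prems Qc by blast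
    have "h [^] Suc i \<otimes> x \<otimes> inv (h [^] Suc i) = h \<otimes> (h [^] i \<otimes> x \<otimes> inv (h [^] i)) \<otimes> inv h"
      using nat_pow_Suc2[OF h(1)] h(1) xc by (simp add: gsimps)
    then show ?case using hQ Suc by simp
  qed
  have normHs: "y \<otimes> x \<otimes> inv y \<in> Q" if "y \<in> Hs" "x \<in> Q" for x y
    using that normHs0 unfolding Hs_def by blast
  have QHs: "y = \<one>" if "y \<in> Q" "y \<in> Hs" for y
  proof -
    have "ord y = 1" using pel_one_if[OF pelQ[OF that(1)] pelHs[OF that(2)] qr] .
    then show ?thesis using ord_eq_1 that(1) Qc by blast
  qed
  define Hx where "Hx x = (\<lambda>y. x \<otimes> y \<otimes> inv x) ` Hs" for x
  define K where "K = (\<lambda>(x,y). x \<otimes> y) ` (Q \<times> Hs)"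
  define A where "A x = Hx x - {\<one>}" for x
  define U where "U = Q \<union> (\<Union>x\<in>Q. A x)"
  have d1: "Q \<inter> (\<Union>x\<in>Q. A x) = {}"
  proof (rule ccontr)
    assume "Q \<inter> (\<Union>x\<in>Q. A x) \<noteq> {}"
    then obtain w x where w: "w \<in> Q" "x \<in> Q" "w \<in> Hx x" "w \<noteq> \<one>" unfolding A_def by blast
    then obtain y where y: "y \<in> Hs" "w = x \<otimes> y \<otimes> inv x" unfolding Hx_def by blast
    have xc: "x \<in> carrier G" using w Qc by blast
    have yc: "y \<in> carrier G" using y Hsc by blast
    have "y = inv x \<otimes> w \<otimes> x" using y(2) xc yc by (simp add: gsimps)
    then have "y \<in> Q" using w Q(1) by (simp add: subgroup.m_closed subgroup.m_inv_closed)
    then have "y = \<one>" using QHs y(1) by blast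
    then have "w = \<one>" using y(2) xc by simp
    then show False using w(4) by simp
  qed
  have d2: "A x \<inter> A x' = {}" if xx: "x \<in> Q" "x' \<in> Q" "x \<noteq> x'" for x x'
  proof (rule ccontr)
    assume "A x \<inter> A x' \<noteq> {}"
    then obtain w where w: "w \<in> Hx x" "w \<in> Hx x'" "w \<noteq> \<one>" unfolding A_def by blast
    obtain y where y: "y \<in> Hs" "w = x \<otimes> y \<otimes> inv x" using w(1) unfolding Hx_def by blast
    obtain y' where y': "y' \<in> Hs" "w = x' \<otimes> y' \<otimes> inv x'" using w(2) unfolding Hx_def by blast
    have xc: "x \<in> carrier G" and xc': "x' \<in> carrier G" using xx Qc by auto
    have yc: "y \<in> carrier G" and yc': "y' \<in> carrier G" using y y' Hsc by auto
    have y1: "y \<noteq> \<one>" using w(3) y(2) xc by auto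
    define z where "z = inv x' \<otimes> x"
    have zQ: "z \<in> Q" unfolding z_def using xx Q(1) by (simp add: subgroup.m_closed subgroup.m_inv_closed)
    have zc: "z \<in> carrier G" using zQ Qc by blast
    have "inv x' \<otimes> (x \<otimes> y \<otimes> inv x) \<otimes> x = z \<otimes> y" unfolding z_def using xc xc' yc by (simp add: gsimps)
    moreover have "inv x' \<otimes> (x' \<otimes> y' \<otimes> inv x') \<otimes> x = y' \<otimes> z" unfolding z_def using xc xc' yc' by (simp add: gsimps)
    ultimately have zy: "z \<otimes> y = y' \<otimes> z" using y(2) y'(2) by simp
    define c where "c = y' \<otimes> inv y"
    have "c = z \<otimes> (y \<otimes> inv z \<otimes> inv y)"
    proof -
      have "z \<otimes> (y \<otimes> inv z \<otimes> inv y) = (z \<otimes> y) \<otimes> inv z \<otimes> inv y" using zc yc by (simp add: gsimps)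
      also have "\<dots> = y' \<otimes> inv y" using zy zc yc yc' by (simp add: gsimps)
      finally show ?thesis unfolding c_def by simp
    qed
    moreover have "y \<otimes> inv z \<otimes> inv y \<in> Q" using normHs[OF y(1)] zQ Q(1) by (simp add: subgroup.m_inv_closed)
    ultimately have cQ: "c \<in> Q" using zQ Q(1) by (simp add: subgroup.m_closed)
    obtain i where i: "y = h [^] (i::nat)" using y(1) unfolding Hs_def by blast
    obtain j where j: "y' = h [^] (j::nat)" using y'(1) unfolding Hs_def by blast
    have cpow: "c = h [^] (int j - int i)" unfolding c_def i j using int_pow_diff[OF h(1)] by (simp add: int_pow_int)
    have cc: "c \<in> carrier G" using cpow h(1) by simp
    have "c [^] (int (ord h)) = h [^] ((int j - int i) * int (ord h))" using cpow int_pow_pow[OF h(1)] by simp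
    also have "\<dots> = \<one>" using int_pow_eq_id[OF h(1)] by simp
    finally have "c [^] ord h = \<one>" by (simp add: int_pow_int)
    then have "ord c dvd ord h" using pow_eq_id[OF cc] by simp
    then have "pel r (ord c)" using pel_dvd h(3) by blast
    then have "ord c = 1" using pel_one_if[OF pelQ[OF cQ]] qr by blast
    then have "c = \<one>" using ord_eq_1[OF cc] by simp
    then have "y' = \<one> \<otimes> y" using inv_solve_right'[OF one_closed yc' yc] unfolding c_def by simp
    then have "y' = y" using yc by simp
    then have "y \<otimes> z = z \<otimes> y" using zy by simp
    moreover have "coprime (ord y) (ord z)" using pel_coprime[OF pelHs[OF y(1)] pelQ[OF zQ]] qr by simp
    ultimately have "z = \<one>" using fix_one[OF eppo fin yc y1 zc] by blast
    then have "x = x' \<otimes> \<one>" using inv_solve_left'[OF one_closed xc' xc] unfolding z_def by simp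
    then have "x = x'" using xc' by simp
    then show False using xx(3) by simp
  qed
  have UK: "U \<subseteq> K"
  proof
    fix w assume "w \<in> U"
    then consider "w \<in> Q" | x where "x \<in> Q" "w \<in> Hx x" unfolding U_def A_def by blast
    then show "w \<in> K"
    proof cases
      case 1
      then have "w = w \<otimes> \<one>" using Qc by auto
      then show ?thesis unfolding K_def using 1 oneHs by force
    next
      case 2
      then obtain y where y: "y \<in> Hs" "w = x \<otimes> y \<otimes> inv x" unfolding Hx_def by blast
      have xc: "x \<in> carrier G" using 2 Qc by blast
      have yc: "y \<in> carrier G" using y Hsc by blast
      have "w = (x \<otimes> (y \<otimes> inv x \<otimes> inv y)) \<otimes> y" using y(2) xc yc by (simp add: gsimps)
      moreover have "x \<otimes> (y \<otimes> inv x \<otimes> inv y) \<in> Q"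
        using normHs[OF y(1)] 2(1) Q(1) by (simp add: subgroup.m_closed subgroup.m_inv_closed)
      ultimately show ?thesis unfolding K_def using y(1) by force
    qed
  qed
  have finK: "finite K" unfolding K_def using finQ finHs by simp
  have cardK: "card K \<le> card Q * card Hs"
    unfolding K_def using card_image_le[of "Q \<times> Hs"] finQ finHs by (simp add: card_cartesian_product)
  have finA: "finite (A x)" for x unfolding A_def Hx_def using finHs by simp
  have cardA: "card (A x) = card Hs - 1" if "x \<in> Q" for x
  proof -
    have xc: "x \<in> carrier G" using that Qc by blast
    have inj: "inj_on (\<lambda>y. x \<otimes> y \<otimes> inv x) Hs"
      by (rule inj_onI) (use xc Hsc conjugation_is_inj in blast)
    have "\<one> \<in> Hx x" unfolding Hx_def using oneHs xc by force
    then show ?thesis unfolding A_def using card_image[OF inj] unfolding Hx_def by simp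
  qed
  have cardU0: "card (\<Union>x\<in>Q. A x) = card Q * (card Hs - 1)"
  proof -
    have "card (\<Union>x\<in>Q. A x) = (\<Sum>x\<in>Q. card (A x))"
      by (rule card_UN_disjoint) (use finQ finA d2 in auto)
    also have "\<dots> = (\<Sum>x\<in>Q. card Hs - 1)" using cardA by simp
    finally show ?thesis by simp
  qed
  have "card U = card Q + card Q * (card Hs - 1)"
    unfolding U_def using card_Un_disjoint[OF finQ _ d1] finA finQ cardU0 by simp
  moreover have "card Hs \<ge> 1" using oneHs finHs by (metis One_nat_def Suc_leI card_gt_0_iff empty_iff)
  ultimately have "card U = card Q * card Hs" by (simp add: algebra_simps)
  then have UeqK: "U = K" using card_subset_eq[OF finK UK] cardK card_mono[OF finK UK] by simp
  have cg: "comm_group (G\<lparr>carrier := V\<rparr>)" using sub_comm_group[OF sV comm] .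
  interpret VG: comm_group "G\<lparr>carrier := V\<rparr>" by (rule cg)
  define f where "f = (\<lambda>k. k \<otimes> v \<otimes> inv k)"
  have fV: "\<And>k. k \<in> carrier G \<Longrightarrow> f k \<in> V" unfolding f_def using normal_invE(2)[OF V] v by blast
  have Kc: "K \<subseteq> carrier G" unfolding K_def using Qc Hsc by auto
  have NK: "finprod (G\<lparr>carrier := V\<rparr>) f K = \<one>"
  proof -
    have "h \<otimes> k \<in> K" if kK: "k \<in> K" for k
    proof -
      obtain x y where xy: "x \<in> Q" "y \<in> Hs" "k = x \<otimes> y" using kK unfolding K_def by auto
      have xc: "x \<in> carrier G" using xy Qc by blast
      have yc: "y \<in> carrier G" using xy Hsc by blast
      have "h \<otimes> k = (h \<otimes> x \<otimes> inv h) \<otimes> (h \<otimes> y)" using xy(3) xc yc h(1) by (simp add: gsimps)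
      then show ?thesis unfolding K_def using hQ[OF xy(1)] hHs[OF xy(2)] by force
    qed
    then show ?thesis unfolding f_def
      using norm_trivial[OF eppo fin V comm pV Kc h(1) h(2) _ h(3) pr v(1)] by blast
  qed
  have NQ: "finprod (G\<lparr>carrier := V\<rparr>) f Q = \<one>"
  proof -
    have "q \<ge> 2" using q prime_ge_2_nat by blast
    then have "q ^ e \<ge> q" using Q(3) by (simp add: self_le_power)
    then obtain a where a: "a \<in> Q" "a \<noteq> \<one>" using nontriv_elem[OF Q(1) finQ] Q(2) \<open>q \<ge> 2\<close> by force
    have ac: "a \<in> carrier G" using a Qc by blast
    have "a \<otimes> s \<in> Q" if "s \<in> Q" for s using a(1) that Q(1) by (simp add: subgroup.m_closed)
    then show ?thesis unfolding f_def
      using norm_trivial[OF eppo fin V comm pV Qc ac a(2) _ pelQ[OF a(1)] pq v(1)] by blast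
  qed
  have NA: "finprod (G\<lparr>carrier := V\<rparr>) f (A x) = inv v" if xQ: "x \<in> Q" for x
  proof -
    have xc: "x \<in> carrier G" using xQ Qc by blast
    define a where "a = x \<otimes> h \<otimes> inv x"
    have ac: "a \<in> carrier G" unfolding a_def using xc h(1) by simp
    have a1: "a \<noteq> \<one>"
    proof
      assume "a = \<one>"
      then have "x \<otimes> h \<otimes> inv x = x \<otimes> \<one> \<otimes> inv x" unfolding a_def using xc by simp
      then have "h = \<one>" using conjugation_is_inj[OF xc h(1) one_closed] by blast
      then show False using h(2) by simp
    qed
    have "a [^] ord h = x \<otimes> (h [^] ord h) \<otimes> inv x" unfolding a_def using conj_pow[OF xc h(1)] .
    then have "a [^] ord h = \<one>" using xc pow_ord_eq_1[OF h(1)] by simp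
    then have "ord a dvd ord h" using pow_eq_id[OF ac] by simp
    then have pa: "pel r (ord a)" using pel_dvd h(3) by blast
    have HxC: "Hx x \<subseteq> carrier G" unfolding Hx_def using xc Hsc by auto
    have "a \<otimes> s \<in> Hx x" if sH: "s \<in> Hx x" for s
    proof -
      obtain y where y: "y \<in> Hs" "s = x \<otimes> y \<otimes> inv x" using sH unfolding Hx_def by blast
      have yc: "y \<in> carrier G" using y Hsc by blast
      have "a \<otimes> s = x \<otimes> (h \<otimes> y) \<otimes> inv x" unfolding a_def using y(2) xc yc h(1) by (simp add: gsimps)
      then show ?thesis unfolding Hx_def using hHs[OF y(1)] by blast
    qed
    then have NH: "finprod (G\<lparr>carrier := V\<rparr>) f (Hx x) = \<one>" unfolding f_def
      using norm_trivial[OF eppo fin V comm pV HxC ac a1 _ pa pr v(1)] by blast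
    have one_in: "\<one> \<in> Hx x" unfolding Hx_def using oneHs xc by force
    have ins: "Hx x = insert \<one> (A x)" unfolding A_def using one_in by blast
    have fA: "f \<in> A x \<rightarrow> carrier (G\<lparr>carrier := V\<rparr>)" using fV HxC unfolding A_def by auto
    have f1: "f \<one> = v" unfolding f_def using vc by simp
    have "finprod (G\<lparr>carrier := V\<rparr>) f (Hx x) = f \<one> \<otimes> finprod (G\<lparr>carrier := V\<rparr>) f (A x)"
      using VG.finprod_insert[OF finA[of x], of "\<one>" f] fA fV[OF one_closed] ins unfolding A_def by simp
    then have e: "v \<otimes> finprod (G\<lparr>carrier := V\<rparr>) f (A x) = \<one>" using NH f1 by simp
    have Pc: "finprod (G\<lparr>carrier := V\<rparr>) f (A x) \<in> carrier G" using VG.finprod_closed[OF fA] Vc by auto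
    have "finprod (G\<lparr>carrier := V\<rparr>) f (A x) = inv v \<otimes> (v \<otimes> finprod (G\<lparr>carrier := V\<rparr>) f (A x))"
      using inv_cancel_l1[OF vc Pc] by simp
    then show ?thesis using e vc by simp
  qed
  have fU: "f \<in> U \<rightarrow> carrier (G\<lparr>carrier := V\<rparr>)" using fV UK Kc by auto
  have finUA: "finite (\<Union>x\<in>Q. A x)" using finQ finA by blast
  have "finprod (G\<lparr>carrier := V\<rparr>) f U
      = finprod (G\<lparr>carrier := V\<rparr>) f Q \<otimes> finprod (G\<lparr>carrier := V\<rparr>) f (\<Union>x\<in>Q. A x)"
    unfolding U_def using VG.finprod_Un_disjoint[OF finQ finUA d1] fU unfolding U_def by auto
  also have "finprod (G\<lparr>carrier := V\<rparr>) f (\<Union>x\<in>Q. A x) = finprod (G\<lparr>carrier := V\<rparr>) (\<lambda>x. finprod (G\<lparr>carrier := V\<rparr>) f (A x)) Q"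
  proof (rule VG.finprod_UN_disjoint)
    show "finite Q" by (rule finQ)
    show "\<And>i. i \<in> Q \<Longrightarrow> finite (A i)" using finA by blast
    show "pairwise (\<lambda>i j. disjnt (A i) (A j)) Q" unfolding pairwise_def disjnt_def using d2 by blast
    show "\<And>i x. i \<in> Q \<Longrightarrow> x \<in> A i \<Longrightarrow> f x \<in> carrier (G\<lparr>carrier := V\<rparr>)" using fU unfolding U_def by auto
  qed
  also have "\<dots> = finprod (G\<lparr>carrier := V\<rparr>) (\<lambda>x. inv v) Q"
    by (rule VG.finprod_cong') (use NA v(1) sV in \<open>auto simp: subgroup.m_inv_closed\<close>)
  also have "\<dots> = (inv v) [^]\<^bsub>G\<lparr>carrier := V\<rparr>\<^esub> card Q"
    by (rule VG.finprod_const) (use v(1) sV in \<open>simp add: subgroup.m_inv_closed\<close>)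
  also have "\<dots> = (inv v) [^] card Q" by (simp add: nat_pow_consistent[symmetric])
  finally have "finprod (G\<lparr>carrier := V\<rparr>) f U = (inv v) [^] card Q" using NQ vc by simp
  then have "(inv v) [^] card Q = \<one>" using NK UeqK by simp
  then have "ord (inv v) dvd card Q" using pow_eq_id[of "inv v"] vc by simp
  then have "ord v dvd q ^ e" using vc Q(2) by simp
  then have "pel q (ord v)" using pel_dvd pel_power[OF q] by blast
  then have "ord v = 1" using pel_one_if[OF pV[OF v(1)]] pq by blast
  then show False using ord_eq_1[OF vc] v(2) by simp
qed


lemma rcos_action:
  assumes P: "subgroup P G" and Q2: "subgroup Q2 G"
  shows "group_action (G\<lparr>carrier := Q2\<rparr>) (rcosets P) (\<lambda>y. \<lambda>C \<in> rcosets P. C #> inv y)"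
proof -
  let ?E = "rcosets P"
  let ?phi = "\<lambda>y. \<lambda>C \<in> rcosets P. C #> inv y"
  have Pc: "P \<subseteq> carrier G" using P subgroup.subset by blast
  have Q2c: "Q2 \<subseteq> carrier G" using Q2 subgroup.subset by blast
  have Ec: "C \<subseteq> carrier G" if "C \<in> ?E" for C using subgroup.rcosets_carrier[OF P is_group that] .
  have mem: "C #> a \<in> ?E" if CE: "C \<in> ?E" and a: "a \<in> carrier G" for C a
  proof -
    obtain x where x: "x \<in> carrier G" "C = P #> x" using CE unfolding RCOSETS_def by blast
    have "C #> a = P #> (x \<otimes> a)" using x a Pc coset_mult_assoc by simp
    then show ?thesis unfolding RCOSETS_def using x(1) a by auto
  qed
  have bk1: "C #> a #> inv a = C" if CE: "C \<in> ?E" and a: "a \<in> carrier G" for C a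
    using coset_mult_assoc[OF Ec[OF CE] a inv_closed[OF a]] a Ec[OF CE] by simp
  have bk2: "C #> inv a #> a = C" if CE: "C \<in> ?E" and a: "a \<in> carrier G" for C a
    using coset_mult_assoc[OF Ec[OF CE] inv_closed[OF a] a] a Ec[OF CE] by simp
  have bij: "?phi y \<in> Bij ?E" if y: "y \<in> Q2" for y
  proof -
    have yc: "y \<in> carrier G" using y Q2c by blast
    have "bij_betw (\<lambda>C. C #> inv y) ?E ?E"
    proof (rule bij_betwI[where g = "\<lambda>C. C #> y"])
      show "(\<lambda>C. C #> inv y) \<in> ?E \<rightarrow> ?E" using mem yc by simp
      show "(\<lambda>C. C #> y) \<in> ?E \<rightarrow> ?E" using mem yc by simp
      show "C #> inv y #> y = C" if "C \<in> ?E" for C using bk2[OF that yc] .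
      show "C #> y #> inv y = C" if "C \<in> ?E" for C using bk1[OF that yc] .
    qed
    then have "bij_betw (?phi y) ?E ?E" by (rule bij_betw_cong[THEN iffD1, rotated]) simp
    then show ?thesis unfolding Bij_def by simp
  qed
  have hom: "?phi \<in> hom (G\<lparr>carrier := Q2\<rparr>) (BijGroup ?E)"
  proof (rule homI)
    show "?phi y \<in> carrier (BijGroup ?E)" if "y \<in> carrier (G\<lparr>carrier := Q2\<rparr>)" for y
      using bij that unfolding BijGroup_def by simp
    fix x y assume xy: "x \<in> carrier (G\<lparr>carrier := Q2\<rparr>)" "y \<in> carrier (G\<lparr>carrier := Q2\<rparr>)"
    then have xQ: "x \<in> Q2" and yQ: "y \<in> Q2" by auto
    have xc: "x \<in> carrier G" and yc: "y \<in> carrier G" using xQ yQ Q2c by auto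
    have "?phi (x \<otimes> y) = compose ?E (?phi x) (?phi y)"
    proof (rule ext)
      fix C
      show "?phi (x \<otimes> y) C = compose ?E (?phi x) (?phi y) C"
      proof (cases "C \<in> ?E")
        case True
        have "C #> inv (x \<otimes> y) = C #> inv y #> inv x"
          using coset_mult_assoc[OF Ec[OF True] inv_closed[OF yc] inv_closed[OF xc]] xc yc
          by (simp add: inv_mult_group)
        then show ?thesis using True mem[OF True inv_closed[OF yc]] by (simp add: compose_def)
      next
        case False
        then show ?thesis by (simp add: compose_def)
      qed
    qed
    then show "?phi (x \<otimes>\<^bsub>G\<lparr>carrier := Q2\<rparr>\<^esub> y) = ?phi x \<otimes>\<^bsub>BijGroup ?E\<^esub> ?phi y"
      using bij[OF xQ] bij[OF yQ] unfolding BijGroup_def by simp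
  qed
  have gQ: "group (G\<lparr>carrier := Q2\<rparr>)" using subgroup.subgroup_is_group[OF Q2 is_group] .
  show ?thesis unfolding group_action_def group_hom_def group_hom_axioms_def
    using gQ group_BijGroup hom by blast
qed

lemma pgroup_fixed_point:
  assumes q: "Factorial_Ring.prime q" and ord: "order G = q ^ e"
    and act: "group_action G E phi" and finE: "finite E" and nd: "\<not> q dvd card E"
  shows "\<exists>x\<in>E. \<forall>g\<in>carrier G. phi g x = x"
proof (rule ccontr)
  assume nf: "\<not> (\<exists>x\<in>E. \<forall>g\<in>carrier G. phi g x = x)"
  interpret A: group_action G E phi by (rule act)
  have dv: "q dvd card orb" if orbI: "orb \<in> orbits G E phi" for orb
  proof -
    obtain x where x: "x \<in> E" "orb = orbit G phi x" using orbI unfolding orbits_def by blast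
    have "card (orbit G phi x) * card (stabilizer G phi x) = q ^ e"
      using A.orbit_stabilizer_theorem[OF x(1)] ord by simp
    then have d: "card (orbit G phi x) dvd q ^ e" by (metis dvd_triv_left)
    obtain g where g: "g \<in> carrier G" "phi g x \<noteq> x" using nf x(1) by blast
    have "phi g x \<in> orbit G phi x" unfolding orbit_def using g(1) by blast
    moreover have "x \<in> orbit G phi x" using A.orbit_refl[OF x(1)] .
    moreover have "orbit G phi x \<subseteq> E" unfolding orbit_def using A.element_image x(1) by blast
    ultimately have "card {x, phi g x} \<le> card (orbit G phi x)"
      using finE finite_subset by (intro card_mono) auto
    then have "card (orbit G phi x) \<noteq> 1" using g(2) by simp
    then obtain t where t: "Factorial_Ring.prime t" "t dvd card (orbit G phi x)" using prime_factor_nat by blast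
    have "pel q (card (orbit G phi x))" using pel_dvd[OF pel_power[OF q] d] .
    then have "t = q" using t unfolding pel_def by blast
    then show ?thesis using t x(2) by simp
  qed
  have "(\<Sum>orb\<in>orbits G E phi. \<Sum>x\<in>orb. (1::nat)) = (\<Sum>x\<in>E. 1)"
    using A.disjoint_sum[OF finE] .
  then have "(\<Sum>orb\<in>orbits G E phi. card orb) = card E" by simp
  moreover have "q dvd (\<Sum>orb\<in>orbits G E phi. card orb)" using dv by (simp add: dvd_sum)
  ultimately show False using nd by simp
qed

lemma sylow_conj:
  assumes fin: "finite (carrier G)" and q: "Factorial_Ring.prime q"
    and P: "subgroup P G" "card P = q ^ e" and om: "order G = q ^ e * m" "\<not> q dvd m"
    and Q2: "subgroup Q2 G" "card Q2 = q ^ e"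
  shows "\<exists>x\<in>carrier G. (\<lambda>y. x \<otimes> y \<otimes> inv x) ` Q2 = P"
proof -
  let ?E = "rcosets P"
  have "card ?E * card P = order G" using lagrange[OF P(1)] .
  then have cE: "card ?E = m" using om(1) P(2) q
    by (metis mult.commute mult_cancel_left power_not_zero prime_nat_iff zero_less_iff_neq_zero gr_implies_not0)
  have finE: "finite ?E" using fin unfolding RCOSETS_def by blast
  have Pc: "P \<subseteq> carrier G" using P(1) subgroup.subset by blast
  have Q2c: "Q2 \<subseteq> carrier G" using Q2(1) subgroup.subset by blast
  interpret GQ: group "G\<lparr>carrier := Q2\<rparr>" using subgroup.subgroup_is_group[OF Q2(1) is_group] .
  have oQ: "order (G\<lparr>carrier := Q2\<rparr>) = q ^ e" using Q2(2) unfolding order_def by simp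
  obtain C where C: "C \<in> ?E" and fixC: "\<forall>y\<in>carrier (G\<lparr>carrier := Q2\<rparr>). (\<lambda>C \<in> ?E. C #> inv y) C = C"
    using GQ.pgroup_fixed_point[OF q oQ rcos_action[OF P(1) Q2(1)] finE] cE om(2) by blast
  obtain x where x: "x \<in> carrier G" "C = P #> x" using C unfolding RCOSETS_def by blast
  have sub: "x \<otimes> y \<otimes> inv x \<in> P" if yQ: "y \<in> Q2" for y
  proof -
    have yc: "y \<in> carrier G" using yQ Q2c by blast
    have "C #> inv (inv y) = C" using fixC yQ Q2(1) C by (simp add: subgroup.m_inv_closed)
    then have "P #> (x \<otimes> y) = P #> x" using x coset_mult_assoc[OF Pc x(1) yc] yc by simp
    moreover have "x \<otimes> y \<in> P #> (x \<otimes> y)" using rcos_self[OF _ P(1)] x(1) yc by simp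
    ultimately have "x \<otimes> y \<in> P #> x" by simp
    then have "x \<otimes> y \<otimes> inv x \<in> P" using subgroup.rcos_module_imp[OF P(1) is_group x(1)] by blast
    then show ?thesis .
  qed
  have inj: "inj_on (\<lambda>y. x \<otimes> y \<otimes> inv x) Q2"
    by (rule inj_onI) (use x(1) Q2c conjugation_is_inj in blast)
  have "(\<lambda>y. x \<otimes> y \<otimes> inv x) ` Q2 \<subseteq> P" using sub by blast
  moreover have "card ((\<lambda>y. x \<otimes> y \<otimes> inv x) ` Q2) = card P" using card_image[OF inj] Q2(2) P(2) by simp
  moreover have "finite P" using Pc fin finite_subset by blast
  ultimately have "(\<lambda>y. x \<otimes> y \<otimes> inv x) ` Q2 = P" using card_subset_eq by blast
  then show ?thesis using x(1) by blast
qed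


lemma conj_subgroup:
  assumes H: "subgroup H G" and g: "g \<in> carrier G"
  shows "subgroup ((\<lambda>y. g \<otimes> y \<otimes> inv g) ` H) G"
proof (rule subgroupI)
  have Hc: "H \<subseteq> carrier G" using H subgroup.subset by blast
  show "(\<lambda>y. g \<otimes> y \<otimes> inv g) ` H \<subseteq> carrier G" using Hc g by auto
  show "(\<lambda>y. g \<otimes> y \<otimes> inv g) ` H \<noteq> {}" using subgroup.one_closed[OF H] by blast
  fix a assume "a \<in> (\<lambda>y. g \<otimes> y \<otimes> inv g) ` H"
  then obtain y where y: "y \<in> H" "a = g \<otimes> y \<otimes> inv g" by blast
  have yc: "y \<in> carrier G" using y Hc by blast
  have "inv a = g \<otimes> inv y \<otimes> inv g" using y(2) yc g by (simp add: gsimps)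
  moreover have "inv y \<in> H" using y(1) H by (simp add: subgroup.m_inv_closed)
  ultimately show "inv a \<in> (\<lambda>y. g \<otimes> y \<otimes> inv g) ` H" by blast
next
  have Hc: "H \<subseteq> carrier G" using H subgroup.subset by blast
  fix a b assume "a \<in> (\<lambda>y. g \<otimes> y \<otimes> inv g) ` H" "b \<in> (\<lambda>y. g \<otimes> y \<otimes> inv g) ` H"
  then obtain y z where y: "y \<in> H" "a = g \<otimes> y \<otimes> inv g" and z: "z \<in> H" "b = g \<otimes> z \<otimes> inv g" by blast
  have yc: "y \<in> carrier G" using y Hc by blast
  have zc: "z \<in> carrier G" using z Hc by blast
  have "a \<otimes> b = g \<otimes> (y \<otimes> z) \<otimes> inv g" using y(2) z(2) yc zc g by (simp add: gsimps)
  moreover have "y \<otimes> z \<in> H" using y(1) z(1) H by (simp add: subgroup.m_closed)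
  ultimately show "a \<otimes> b \<in> (\<lambda>y. g \<otimes> y \<otimes> inv g) ` H" by blast
qed

lemma frattini_h:
  assumes eppo: "Sigma_set G = {}" and fin: "finite (carrier G)"
    and M: "M \<lhd> G" and q: "Factorial_Ring.prime q" "q dvd card M"
    and r: "Factorial_Ring.prime r" "\<not> r dvd card M"
    and g: "g \<in> carrier G" "ord g = r"
  shows "\<exists>Q e h. subgroup Q G \<and> card Q = q ^ e \<and> e > 0 \<and> h \<in> carrier G \<and> h \<noteq> \<one>
           \<and> pel r (ord h) \<and> (\<forall>x\<in>Q. h \<otimes> x \<otimes> inv h \<in> Q)"
proof -
  have sM: "subgroup M G" using normal_imp_subgroup[OF M] .
  have Mc: "M \<subseteq> carrier G" using sM subgroup.subset by blast
  have finM: "finite M" using Mc fin finite_subset by blast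
  have cM0: "card M \<noteq> 0" using finM subgroup.one_closed[OF sM] by auto
  interpret MG: group "G\<lparr>carrier := M\<rparr>" using subgroup.subgroup_is_group[OF sM is_group] .
  have finMG: "finite (carrier (G\<lparr>carrier := M\<rparr>))" using finM by simp
  define e where "e = multiplicity q (card M)"
  have nu: "\<not> is_unit q" using prime_gt_1_nat[OF q(1)] by simp
  define m where "m = card M div q ^ e"
  have m1: "card M = q ^ e * m"
    using multiplicity_dvd[where p=q and x="card M"] unfolding m_def e_def by simp
  have m2: "\<not> q dvd m"
    using multiplicity_decompose[where p=q and x="card M"] cM0 nu unfolding m_def e_def by simp
  note m = m1 m2
  have e0: "e > 0" unfolding e_def using multiplicity_gt_zero_iff[where p=q and x="card M"] cM0 nu q(2) by simp
  have oMG: "order (G\<lparr>carrier := M\<rparr>) = q ^ e * m" using m(1) unfolding order_def by simp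
  obtain Q where Q: "subgroup Q (G\<lparr>carrier := M\<rparr>)" "card Q = q ^ e"
    using sylow_thm[OF q(1) MG.is_group oMG finMG] by blast
  have QG: "subgroup Q G" using incl_subgroup[OF sM Q(1)] .
  have QM: "Q \<subseteq> M" using subgroup.subset[OF Q(1)] by simp
  have Qc: "Q \<subseteq> carrier G" using QG subgroup.subset by blast
  define Q2 where "Q2 = (\<lambda>y. g \<otimes> y \<otimes> inv g) ` Q"
  have Q2G: "subgroup Q2 G" unfolding Q2_def using conj_subgroup[OF QG g(1)] .
  have Q2M: "Q2 \<subseteq> M" unfolding Q2_def using QM normal_invE(2)[OF M g(1)] by blast
  have Q2MG: "subgroup Q2 (G\<lparr>carrier := M\<rparr>)" using subgroup_incl[OF Q2G sM Q2M] .
  have injg: "inj_on (\<lambda>y. g \<otimes> y \<otimes> inv g) Q"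
    by (rule inj_onI) (use g(1) Qc conjugation_is_inj in blast)
  have cQ2: "card Q2 = q ^ e" unfolding Q2_def using card_image[OF injg] Q(2) by simp
  obtain y where y: "y \<in> carrier (G\<lparr>carrier := M\<rparr>)"
    and yconj: "(\<lambda>z. y \<otimes>\<^bsub>G\<lparr>carrier := M\<rparr>\<^esub> z \<otimes>\<^bsub>G\<lparr>carrier := M\<rparr>\<^esub> inv\<^bsub>G\<lparr>carrier := M\<rparr>\<^esub> y) ` Q2 = Q"
    using MG.sylow_conj[OF finMG q(1) Q oMG m(2) Q2MG cQ2] by blast
  have yM: "y \<in> M" using y by simp
  have yc: "y \<in> carrier G" using yM Mc by blast
  have yconj': "(\<lambda>z. y \<otimes> z \<otimes> inv y) ` Q2 = Q" using yconj m_inv_consistent[OF sM yM] by simp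
  define n where "n = y \<otimes> g"
  have nc: "n \<in> carrier G" unfolding n_def using yc g(1) by simp
  have nQ: "n \<otimes> x \<otimes> inv n \<in> Q" if xQ: "x \<in> Q" for x
  proof -
    have xc: "x \<in> carrier G" using xQ Qc by blast
    have "n \<otimes> x \<otimes> inv n = y \<otimes> (g \<otimes> x \<otimes> inv g) \<otimes> inv y" unfolding n_def using xc yc g(1) by (simp add: gsimps)
    moreover have "g \<otimes> x \<otimes> inv g \<in> Q2" unfolding Q2_def using xQ by blast
    ultimately show ?thesis using yconj' by blast
  qed
  have pw: "\<exists>w\<in>M. n [^] k = w \<otimes> g [^] k" for k :: nat
  proof (induct k)
    case 0 then show ?case using subgroup.one_closed[OF sM] by force
  next
    case (Suc k)
    then obtain w where w: "w \<in> M" "n [^] k = w \<otimes> g [^] k" by blast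
    have wc: "w \<in> carrier G" using w(1) Mc by blast
    have gk: "g [^] k \<in> carrier G" using g(1) by simp
    define w' where "w' = w \<otimes> (g [^] k \<otimes> y \<otimes> inv (g [^] k))"
    have "g [^] k \<otimes> y \<otimes> inv (g [^] k) \<in> M" using normal_invE(2)[OF M gk yM] .
    then have w'M: "w' \<in> M" unfolding w'_def using w(1) sM by (simp add: subgroup.m_closed)
    have "n [^] Suc k = w \<otimes> g [^] k \<otimes> (y \<otimes> g)" using w(2) n_def by simp
    also have "\<dots> = w' \<otimes> (g [^] k \<otimes> g)" unfolding w'_def using wc gk yc g(1) by (simp add: gsimps)
    also have "g [^] k \<otimes> g = g [^] Suc k" by simp
    finally show ?case using w'M by blast
  qed
  define k where "k = ord n"
  obtain w where w: "w \<in> M" "n [^] k = w \<otimes> g [^] k" using pw by blast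
  have wc: "w \<in> carrier G" using w(1) Mc by blast
  have gk: "g [^] k \<in> carrier G" using g(1) by simp
  have "w \<otimes> g [^] k = \<one>" using w(2) nc unfolding k_def by simp
  then have "g [^] k = inv w" using inv_equality[of "g [^] k" w] wc gk by (metis inv_comm)
  then have gkM: "g [^] k \<in> M" using w(1) sM by (simp add: subgroup.m_inv_closed)
  have d1: "ord (g [^] k) dvd card M" using ord_dvd_sub[OF fin sM gkM] .
  have "(g [^] k) [^] r = \<one>" using g nat_pow_pow[OF g(1)] pow_eq_id[OF g(1)]
    by (metis mult.commute dvd_triv_right)
  then have "ord (g [^] k) dvd r" using pow_eq_id[OF gk] by simp
  then have "ord (g [^] k) = 1 \<or> ord (g [^] k) = r" using r(1) unfolding prime_nat_iff by blast
  then have "ord (g [^] k) = 1" using d1 r(2) by auto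
  then have "g [^] k = \<one>" using ord_eq_1[OF gk] by simp
  then have rk: "r dvd k" using pow_eq_id[OF g(1)] g(2) by simp
  have k0: "k > 0" unfolding k_def using ord_ge_1[OF fin nc] by linarith
  have pn: "pel r (ord n)" using eppo_pel[OF eppo fin nc r(1)] rk k_def by simp
  have "ord n \<noteq> 1" using rk r(1) k_def by (metis nat_dvd_1_iff_1 not_prime_1)
  then have n1: "n \<noteq> \<one>" using ord_eq_1[OF nc] by simp
  show ?thesis using QG Q(2) e0 nc n1 pn nQ by blast
qed


lemma mix_dvd:
  assumes fin: "finite (carrier G)" and x: "x \<in> carrier G" and y: "y \<in> carrier G"
    and comm: "x \<otimes> y = y \<otimes> x" and cop: "coprime (ord x) (ord y)"
  shows "ord x dvd ord (x \<otimes> y) \<and> ord y dvd ord (x \<otimes> y)"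
proof -
  define n where "n = ord (x \<otimes> y)"
  have xyc: "x \<otimes> y \<in> carrier G" using x y by simp
  have "(x \<otimes> y) [^] n = \<one>" using xyc unfolding n_def by simp
  then have e: "x [^] n \<otimes> y [^] n = \<one>" using pow_mult_distrib[OF comm x y] by simp
  define z where "z = x [^] n"
  have zc: "z \<in> carrier G" using x z_def by simp
  have yn: "y [^] n \<in> carrier G" using y by simp
  have zi: "z = inv (y [^] n)" using inv_equality[OF e yn zc[unfolded z_def]] unfolding z_def by simp
  have "z [^] ord x = x [^] (n * ord x)" unfolding z_def using nat_pow_pow[OF x] by simp
  also have "\<dots> = \<one>" using pow_eq_id[OF x] by simp
  finally have "z [^] ord x = \<one>" .
  then have d1: "ord z dvd ord x" using pow_eq_id zc by blast
  have "z [^] ord y = inv ((y [^] n) [^] ord y)" unfolding zi using nat_pow_inv[OF yn] by simp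
  also have "(y [^] n) [^] ord y = y [^] (n * ord y)" using nat_pow_pow[OF y] by simp
  also have "\<dots> = \<one>" using pow_eq_id[OF y] by simp
  finally have "z [^] ord y = \<one>" by simp
  then have d2: "ord z dvd ord y" using pow_eq_id zc by blast
  have "ord z dvd 1" using d1 d2 cop coprime_common_divisor by blast
  then have "ord z = 1" by simp
  then have z1: "z = \<one>" using ord_eq_1 zc by blast
  have "x [^] n = \<one>" using z1 z_def by simp
  then have dx: "ord x dvd n" using pow_eq_id x by blast
  have "inv (y [^] n) = \<one>" using zi z1 by simp
  then have "y [^] n = \<one>" using yn by (metis inv_inv inv_one)
  then have dy: "ord y dvd n" using pow_eq_id y by blast
  show ?thesis using dx dy n_def by simp
qed

lemma final_step:
  assumes eppo: "Sigma_set G = {}" and fin: "finite (carrier G)"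
    and V: "V \<lhd> G" and comm: "\<And>a b. a \<in> V \<Longrightarrow> b \<in> V \<Longrightarrow> a \<otimes> b = b \<otimes> a"
    and pV: "\<And>v. v \<in> V \<Longrightarrow> pel p (ord v)" and v: "v \<in> V" "v \<noteq> \<one>"
    and M: "M \<lhd> G" and q: "Factorial_Ring.prime q" "q dvd card M"
    and r: "Factorial_Ring.prime r" "\<not> r dvd card M" "r dvd order G"
    and pq: "p \<noteq> q" and pr: "p \<noteq> r" and qr: "q \<noteq> r"
  shows False
proof -
  obtain g where g: "g \<in> carrier G" "ord g = r" using cauchy[OF fin r(1) r(3)] by blast
  obtain Q e h where Qeh: "subgroup Q G" "card Q = q ^ e" "e > 0" "h \<in> carrier G" "h \<noteq> \<one>"
      "pel r (ord h)" "\<forall>x\<in>Q. h \<otimes> x \<otimes> inv h \<in> Q"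
    using frattini_h[OF eppo fin M q r(1,2) g] by blast
  show False
    using no_config[OF eppo fin V comm pV v Qeh(1,2,3) q(1) Qeh(4,5,6) _ pq pr qr] Qeh(7) by blast
qed

lemma quot_step:
  assumes eppo: "Sigma_set G = {}" and fin: "finite (carrier G)" and H: "subgroup H G"
    and s: "Factorial_Ring.prime s" "s dvd card H" "\<not> s dvd card (derived G H)"
    and t: "Factorial_Ring.prime t" "t dvd card H" "\<not> t dvd card (derived G H)"
    and st: "s \<noteq> t"
  shows False
proof -
  define W where "W = derived G H"
  interpret HG: group "G\<lparr>carrier := H\<rparr>" using subgroup.subgroup_is_group[OF H is_group] .
  have WN: "W \<lhd> G\<lparr>carrier := H\<rparr>" using derived_subgroup_is_normal[OF H] unfolding W_def .
  interpret WN: normal W "G\<lparr>carrier := H\<rparr>" by (rule WN)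
  define Qt where "Qt = G\<lparr>carrier := H\<rparr> Mod W"
  have cg: "comm_group Qt" using derived_quot_of_subgroup_is_comm_group[OF H] unfolding Qt_def W_def .
  interpret Qt: comm_group Qt by (rule cg)
  have Hc: "H \<subseteq> carrier G" using H subgroup.subset by blast
  have finH: "finite H" using Hc fin finite_subset by blast
  have cQt: "carrier Qt = rcosets\<^bsub>G\<lparr>carrier := H\<rparr>\<^esub> W" unfolding Qt_def FactGroup_def by simp
  have finQt: "finite (carrier Qt)" unfolding cQt RCOSETS_def using finH by simp
  have sW: "subgroup W (G\<lparr>carrier := H\<rparr>)" using normal_imp_subgroup[OF WN] .
  have lag: "card (rcosets\<^bsub>G\<lparr>carrier := H\<rparr>\<^esub> W) * card W = card H"
    using HG.lagrange[OF sW] unfolding order_def by simp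
  have oQt: "order Qt = card (rcosets\<^bsub>G\<lparr>carrier := H\<rparr>\<^esub> W)" unfolding order_def cQt ..
  have sd: "s dvd order Qt" using s lag oQt W_def by (metis prime_dvd_mult_iff)
  have td: "t dvd order Qt" using t lag oQt W_def by (metis prime_dvd_mult_iff)
  obtain a where a: "a \<in> carrier Qt" "Qt.ord a = s" using Qt.cauchy[OF finQt s(1) sd] by blast
  obtain b where b: "b \<in> carrier Qt" "Qt.ord b = t" using Qt.cauchy[OF finQt t(1) td] by blast
  have cop: "coprime (Qt.ord a) (Qt.ord b)" using a b primes_coprime[OF s(1) t(1) st] by simp
  define c where "c = a \<otimes>\<^bsub>Qt\<^esub> b"
  have cc: "c \<in> carrier Qt" unfolding c_def using a b by simp
  have dvds: "s dvd Qt.ord c \<and> t dvd Qt.ord c"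
    using Qt.mix_dvd[OF finQt a(1) b(1) Qt.m_comm[OF a(1) b(1)] cop] a b unfolding c_def by simp
  obtain x where x: "x \<in> H" "c = W #>\<^bsub>G\<lparr>carrier := H\<rparr>\<^esub> x" using cc unfolding cQt RCOSETS_def by auto
  have xc: "x \<in> carrier G" using x(1) Hc by blast
  have "c [^]\<^bsub>Qt\<^esub> ord x = W #>\<^bsub>G\<lparr>carrier := H\<rparr>\<^esub> (x [^]\<^bsub>G\<lparr>carrier := H\<rparr>\<^esub> ord x)"
    using WN.FactGroup_pow[of x "ord x"] x unfolding Qt_def by simp
  also have "x [^]\<^bsub>G\<lparr>carrier := H\<rparr>\<^esub> ord x = \<one>\<^bsub>G\<lparr>carrier := H\<rparr>\<^esub>"
    using pow_ord_eq_1[OF xc] nat_pow_consistent[of x "ord x" H] by simp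
  also have "W #>\<^bsub>G\<lparr>carrier := H\<rparr>\<^esub> \<one>\<^bsub>G\<lparr>carrier := H\<rparr>\<^esub> = W"
    using HG.coset_mult_one[OF subgroup.subset[OF sW]] .
  also have "W = \<one>\<^bsub>Qt\<^esub>" unfolding Qt_def by simp
  finally have "Qt.ord c dvd ord x" using Qt.pow_eq_id[OF cc] by simp
  then have "s dvd ord x" "t dvd ord x" using dvds dvd_trans by blast+
  moreover have "ord x > 0" using ord_ge_1[OF fin xc] by linarith
  ultimately have "num_prime_divisors (ord x) \<ge> 2" using npd_ge2 s(1) t(1) st by blast
  then have "x \<in> Sigma_set G" unfolding Sigma_set_def using xc by simp
  then show False using eppo by simp
qed


lemma sub_pow_closed:
  assumes "subgroup H G" "x \<in> H" shows "x [^] (n::nat) \<in> H"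
proof (induct n)
  case 0 then show ?case using subgroup.one_closed[OF assms(1)] by simp
next
  case (Suc n) then show ?case using assms subgroup.m_closed by simp
qed

lemma final_pair:
  assumes eppo: "Sigma_set G = {}" and fin: "finite (carrier G)"
    and V: "V \<lhd> G" and comm: "\<And>a b. a \<in> V \<Longrightarrow> b \<in> V \<Longrightarrow> a \<otimes> b = b \<otimes> a"
    and pV: "\<And>v. v \<in> V \<Longrightarrow> pel p (ord v)" and v: "v \<in> V" "v \<noteq> \<one>"
    and D: "\<And>k. D k \<lhd> G" and Dfin: "\<And>k. card (D k) dvd card (D 0)" and D0: "card (D 0) = order G"
    and q: "Factorial_Ring.prime q" "q dvd order G" and r: "Factorial_Ring.prime r" "r dvd order G"
    and jq: "\<not> q dvd card (D jq)" "\<And>j. j < jq \<Longrightarrow> q dvd card (D j)"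
    and jr: "\<not> r dvd card (D jr)"
    and lt: "jr < jq"
    and pq: "p \<noteq> q" and pr: "p \<noteq> r" and qr: "q \<noteq> r"
  shows False
  using final_step[OF eppo fin V comm pV v D[of jr] q(1) jq(2)[OF lt] r(1) jr r(2) pq pr qr] .

lemma main_contra:
  assumes eppo: "Sigma_set G = {}" and fin: "finite (carrier G)" and solv: "solvable G"
    and a: "Factorial_Ring.prime a" "a dvd order G"
    and b: "Factorial_Ring.prime b" "b dvd order G"
    and c: "Factorial_Ring.prime c" "c dvd order G"
    and dist: "a \<noteq> b" "b \<noteq> c" "a \<noteq> c"
  shows False
proof -
  define D where "D k = (derived G ^^ k) (carrier G)" for k
  have DN: "D k \<lhd> G" for k
  proof (induct k)
    case 0 then show ?case unfolding D_def using normal_self by simp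
  next
    case (Suc k) then show ?case unfolding D_def using derived_is_normal by simp
  qed
  have DS: "subgroup (D k) G" for k using normal_imp_subgroup[OF DN] .
  have DSuc: "D (Suc k) = derived G (D k)" for k unfolding D_def by simp
  have Dsub: "D (Suc k) \<subseteq> D k" for k unfolding DSuc using derived_incl[OF subset_refl DS] .
  have dvd1: "card (D (Suc k)) dvd card (D k)" for k
  proof -
    interpret DG: group "G\<lparr>carrier := D k\<rparr>" using subgroup.subgroup_is_group[OF DS is_group] .
    have "subgroup (D (Suc k)) (G\<lparr>carrier := D k\<rparr>)" using subgroup_incl[OF DS DS Dsub] .
    then have "card (rcosets\<^bsub>G\<lparr>carrier := D k\<rparr>\<^esub> (D (Suc k))) * card (D (Suc k)) = card (D k)"
      using DG.lagrange unfolding order_def by simp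
    then show ?thesis by (metis dvd_triv_right)
  qed
  have dvdle: "card (D j) dvd card (D i)" if "i \<le> j" for i j
    using that
  proof (induct j rule: dec_induct)
    case base then show ?case by simp
  next
    case (step j) then show ?case using dvd1[of j] dvd_trans by blast
  qed
  have D0: "card (D 0) = order G" unfolding D_def order_def by simp
  have Dfin: "card (D k) dvd card (D 0)" for k using dvdle[of 0 k] by simp
  obtain N0 where N0: "D N0 = {\<one>}" using solv solvable_iff_trivial_derived_seq unfolding D_def by blast
  define N where "N = (LEAST n. D n = {\<one>})"
  have DNone: "D N = {\<one>}" unfolding N_def using LeastI[of "\<lambda>n. D n = {\<one>}", OF N0] .
  have D0ne: "D 0 \<noteq> {\<one>}"
  proof
    assume "D 0 = {\<one>}"
    then have "order G = 1" using D0 by simp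
    then show False using a prime_gt_1_nat[OF a(1)] by (metis nat_dvd_1_iff_1 less_irrefl)
  qed
  have N0': "N \<noteq> 0" using DNone D0ne by auto
  define V where "V = D (N - 1)"
  have VN: "V \<lhd> G" unfolding V_def using DN .
  have sV: "subgroup V G" using DS unfolding V_def .
  have Vc: "V \<subseteq> carrier G" using sV subgroup.subset by blast
  have Vne: "V \<noteq> {\<one>}" unfolding V_def N_def
    using not_less_Least[of "N - 1" "\<lambda>n. D n = {\<one>}"] N0' unfolding N_def by simp
  have dV: "derived G V = {\<one>}" unfolding V_def using DSuc[of "N - 1"] DNone N0' by simp
  have comm: "x \<otimes> y = y \<otimes> x" if xy: "x \<in> V" "y \<in> V" for x y
  proof -
    have xc: "x \<in> carrier G" and yc: "y \<in> carrier G" using xy Vc by auto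
    have "x \<otimes> y \<otimes> inv x \<otimes> inv y \<in> derived_set G V" using xy by blast
    then have "x \<otimes> y \<otimes> inv x \<otimes> inv y \<in> derived G V" unfolding derived_def by (rule generate.incl)
    then have e: "x \<otimes> y \<otimes> inv x \<otimes> inv y = \<one>" using dV by simp
    have "x \<otimes> y = (x \<otimes> y \<otimes> inv x \<otimes> inv y) \<otimes> (y \<otimes> x)" using xc yc by (simp add: gsimps)
    then show ?thesis using e xc yc by simp
  qed
  obtain v where v: "v \<in> V" "v \<noteq> \<one>" using Vne subgroup.one_closed[OF sV] by blast
  have vc: "v \<in> carrier G" using v Vc by blast
  have "ord v \<noteq> 1" using ord_eq_1[OF vc] v(2) by simp
  then obtain p where p: "Factorial_Ring.prime p" "p dvd ord v" using prime_factor_nat by blast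
  have pV: "pel p (ord w)" if wV: "w \<in> V" for w
    unfolding pel_def
  proof (intro allI impI)
    fix t assume t: "Factorial_Ring.prime t" "t dvd ord w"
    show "t = p"
    proof (rule ccontr)
      assume tp: "t \<noteq> p"
      have wc: "w \<in> carrier G" using wV Vc by blast
      have ow: "ord w > 0" using ord_ge_1[OF fin wc] by linarith
      have ov: "ord v > 0" using ord_ge_1[OF fin vc] by linarith
      define u where "u = w [^] (ord w div t)"
      define z where "z = v [^] (ord v div p)"
      have uc: "u \<in> carrier G" unfolding u_def using wc by simp
      have zc: "z \<in> carrier G" unfolding z_def using vc by simp
      have t0: "t > 0" using prime_gt_1_nat[OF t(1)] by simp
      have p0: "p > 0" using prime_gt_1_nat[OF p(1)] by simp
      have ou: "ord u = t"
      proof -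
        have "ord w div t dvd ord w" using t(2) by (metis dvd_div_mult_self dvd_triv_left)
        moreover have "ord w div t \<noteq> 0" using t(2) ow t0 by (metis dvd_div_eq_0_iff not_gr0)
        ultimately have "ord u = ord w div (ord w div t)" unfolding u_def using ord_pow[OF wc] by blast
        then show ?thesis using t(2) ow t0 by (metis dvd_div_eq_0_iff dvd_mult_div_cancel nonzero_mult_div_cancel_right not_gr0)
      qed
      have oz: "ord z = p"
      proof -
        have "ord v div p dvd ord v" using p(2) by (metis dvd_div_mult_self dvd_triv_left)
        moreover have "ord v div p \<noteq> 0" using p(2) ov p0 by (metis dvd_div_eq_0_iff not_gr0)
        ultimately have "ord z = ord v div (ord v div p)" unfolding z_def using ord_pow[OF vc] by blast
        then show ?thesis using p(2) ov p0 by (metis dvd_div_eq_0_iff dvd_mult_div_cancel nonzero_mult_div_cancel_right not_gr0)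
      qed
      have uV: "u \<in> V" unfolding u_def using sub_pow_closed[OF sV wV] .
      have zV: "z \<in> V" unfolding z_def using sub_pow_closed[OF sV v(1)] .
      have u1: "u \<noteq> \<one>" using ou prime_gt_1_nat[OF t(1)] by auto
      have z1: "z \<noteq> \<one>" using oz prime_gt_1_nat[OF p(1)] by auto
      have cop: "coprime (ord u) (ord z)" using ou oz primes_coprime[OF t(1) p(1) tp] by simp
      have "u \<otimes> z \<in> Sigma_set G" using mix[OF fin uc zc comm[OF uV zV] cop u1 z1] .
      then show False using eppo by simp
    qed
  qed
  obtain q r where qr: "Factorial_Ring.prime q" "q dvd order G" "Factorial_Ring.prime r" "r dvd order G"
      "q \<noteq> r" "p \<noteq> q" "p \<noteq> r"
  proof (cases "p = a")
    case True then show ?thesis using that[of b c] b c dist by blast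
  next
    case False
    show ?thesis
    proof (cases "p = b")
      case True then show ?thesis using that[of a c] a c dist False by blast
    next
      case False2: False
      then show ?thesis using that[of a b] a b dist False by blast
    qed
  qed
  have DNq: "\<not> q dvd card (D N)" using DNone prime_gt_1_nat[OF qr(1)] by (simp add: nat_dvd_1_iff_1)
  have DNr: "\<not> r dvd card (D N)" using DNone prime_gt_1_nat[OF qr(3)] by (simp add: nat_dvd_1_iff_1)
  define jq where "jq = (LEAST j. \<not> q dvd card (D j))"
  define jr where "jr = (LEAST j. \<not> r dvd card (D j))"
  have jq1: "\<not> q dvd card (D jq)" unfolding jq_def using LeastI[of "\<lambda>j. \<not> q dvd card (D j)", OF DNq] .
  have jr1: "\<not> r dvd card (D jr)" unfolding jr_def using LeastI[of "\<lambda>j. \<not> r dvd card (D j)", OF DNr] .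
  have jq2: "q dvd card (D j)" if "j < jq" for j using not_less_Least[of j "\<lambda>j. \<not> q dvd card (D j)"] that unfolding jq_def by blast
  have jr2: "r dvd card (D j)" if "j < jr" for j using not_less_Least[of j "\<lambda>j. \<not> r dvd card (D j)"] that unfolding jr_def by blast
  have "jq \<noteq> jr"
  proof
    assume eq: "jq = jr"
    have "jq \<noteq> 0" using jq1 qr(2) D0 by (metis)
    then obtain k where k: "jq = Suc k" using not0_implies_Suc by blast
    have "q dvd card (D k)" using jq2 k by simp
    moreover have "r dvd card (D k)" using jr2 k eq by simp
    moreover have "\<not> q dvd card (derived G (D k))" using jq1 k DSuc by simp
    moreover have "\<not> r dvd card (derived G (D k))" using jr1 k eq DSuc by simp
    ultimately show False using quot_step[OF eppo fin DS[of k] qr(1) _ _ qr(3) _ _ qr(5)] by blast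
  qed
  then consider "jr < jq" | "jq < jr" by linarith
  then show False
  proof cases
    case 1
    then show False using final_pair[OF eppo fin VN comm pV v DN Dfin D0 qr(1,2) qr(3,4) jq1 jq2 jr1 1 qr(6,7,5)] by blast
  next
    case 2
    then show False using final_pair[OF eppo fin VN comm pV v DN Dfin D0 qr(3,4) qr(1,2) jr1 jr2 jq1 2 qr(7,6)] qr(5) by blast
  qed
qed

end

theorem corollary2p2:
  fixes G :: "('a, 'b) monoid_scheme"
  assumes "group G" and "finite (carrier G)" and "solvable G"
    and "isolated_vertices G \<noteq> carrier G"
  shows "Sigma_set G \<noteq> {}"
proof
  assume eppo: "Sigma_set G = {}"
  interpret group G by (rule assms(1))
  have "isolated_vertices G \<subseteq> carrier G" unfolding isolated_vertices_def by blast
  then obtain x where x: "x \<in> carrier G" "x \<notin> isolated_vertices G" using assms(4) by blast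
  then obtain y where y: "y \<in> carrier G" "tgamma_adj G x y" unfolding isolated_vertices_def by blast
  then have n3: "num_prime_divisors (card (generate G {x, y})) \<ge> 3" unfolding tgamma_adj_def by blast
  define S where "S = generate G {x, y}"
  have sS: "subgroup S G" unfolding S_def using generate_is_subgroup x(1) y(1) by simp
  have "card (rcosets\<^bsub>G\<^esub> S) * card S = order G" using lagrange[OF sS] .
  then have dS: "card S dvd order G" by (metis dvd_triv_right)
  have o0: "order G > 0" using assms(2) order_gt_0_iff_finite by blast
  define P where "P = {p. Factorial_Ring.prime p \<and> p dvd order G}"
  have finP: "finite P" unfolding P_def using o0
    by (auto intro: finite_subset[of _ "{..order G}"] dest: dvd_imp_le)
  have "{p. Factorial_Ring.prime p \<and> p dvd card S} \<subseteq> P" unfolding P_def using dS dvd_trans by blast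
  then have "card P \<ge> 3" using n3 card_mono[OF finP] unfolding num_prime_divisors_def S_def
    by (meson order_trans)
  then obtain T where T: "T \<subseteq> P" "card T = 3" by (meson obtain_subset_with_card_n)
  then obtain a b c where abc: "T = {a, b, c}" "a \<noteq> b" "b \<noteq> c" "a \<noteq> c" using card_3_iff by metis
  have "a \<in> P" "b \<in> P" "c \<in> P" using T(1) abc(1) by auto
  then show False using main_contra[OF eppo assms(2,3)] abc(2-4) unfolding P_def by blast
qed

end
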